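(* Let $L>0$ be fixed, $c_{cr}=4/L^2$, and let the constant renormalized force be $F=cN$ with $c>c_{cr}$. Then for all sufficiently large $N$ the fixed point satisfies $x_N>-L$, and $x_N\to-\frac{2}{\sqrt c}$ as $N\to\infty$. The density $\rho$ of the fixed points exists, vanishes on $[-L,-\frac2{\sqrt c})$, and is not constant on $(-\frac2{\sqrt c},0)$.
   Context: A configuration consists of $N+1$ point particles $-L\le x_N<\dots<x_1<x_0\le 0$ on $[-L,0]$ with potential energy $U=\sum_{i=1}^{N}\frac{\alpha_{int}}{x_{i-1}-x_i}-\sum_{i=0}^{N}\int_{-L}^{x_i}\alpha_{ext}F_0\,dx$, $\alpha_{int},\alpha_{ext}>0$, with constant $F_0>0$; the renormalized force is the constant $F=\frac{\alpha_{ext}}{\alpha_{int}}F_0$, which may depend on $N$ (the external force pushes particles towards $0$). Write $\delta_k=x_{k-1}-x_k$, $f_k=\delta_k^{-2}$. The walls at $0,-L$ are completely inelastic. A fixed point is a configuration with $x_0=0$, $f_{k+1}+F=f_k$ for $k=1,\dots,N-1$, and either $x_N=-L$ with $f_N\ge F$, or $x_N>-L$ with $f_N=F$; it exists and is unique. The density $\rho$ of the fixed points (as $N\to\infty$) is a function on $[-L,0]$ such that for every subinterval $I\subset[-L,0]$, $\int_I\rho(x)\,dx=\lim_{N\to\infty}\frac{\#\{i:x_i\in I\}}{N}$. *)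

theory Defs
  imports "HOL-Analysis.Analysis"
begin

text \<open>A configuration of N+1 particles is a function x :: nat => real, only the
values x 0, ..., x N being relevant.  delta_k = x (k-1) - x k, f_k = delta_k^(-2).\<close>

definition fp_f :: "(nat \<Rightarrow> real) \<Rightarrow> nat \<Rightarrow> real" where
  "fp_f x k = 1 / (x (k - 1) - x k)^2"

definition is_fixed_point :: "nat \<Rightarrow> real \<Rightarrow> real \<Rightarrow> (nat \<Rightarrow> real) \<Rightarrow> bool" where
  "is_fixed_point N L F x \<longleftrightarrow>
     -L \<le> x N \<and> (\<forall>i<N. x (Suc i) < x i) \<and> x 0 = 0 \<and>
     (\<forall>k\<in>{1..<N}. fp_f x (k + 1) + F = fp_f x k) \<and>
     ((x N = -L \<and> fp_f x N \<ge> F) \<or> (x N > -L \<and> fp_f x N = F))"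

definition is_fp_density :: "real \<Rightarrow> (nat \<Rightarrow> nat \<Rightarrow> real) \<Rightarrow> (real \<Rightarrow> real) \<Rightarrow> bool" where
  "is_fp_density L X \<rho> \<longleftrightarrow>
     (\<forall>a b. -L \<le> a \<longrightarrow> a \<le> b \<longrightarrow> b \<le> 0 \<longrightarrow>
        \<rho> integrable_on {a..b} \<and>
        ((\<lambda>N. real (card {i\<in>{0..N}. X N i \<in> {a..b}}) / real N)
            \<longlongrightarrow> integral {a..b} \<rho>) sequentially)"

end

theory Submission
  imports Defs
begin


definition HH :: "nat \<Rightarrow> real" where "HH m = (\<Sum>j=1..m. 1 / sqrt (real j))"

lemma HH_0[simp]: "HH 0 = 0" by (simp add: HH_def)
lemma HH_Suc: "HH (Suc m) = HH m + 1 / sqrt (real (Suc m))"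
  by (simp add: HH_def)

lemma HH_upper: "HH m \<le> 2 * sqrt (real m)"
proof (induction m)
  case 0 then show ?case by simp
next
  case (Suc m)
  have s: "sqrt (real m) \<le> sqrt (real (Suc m))" by simp
  have p: "sqrt (real (Suc m)) > 0" by simp
  have "1 / sqrt (real (Suc m)) \<le> 2 * sqrt (real (Suc m)) - 2 * sqrt (real m)"
  proof -
    have "(sqrt (real (Suc m)))^2 = real m + 1" by simp
    moreover have "sqrt (real m) * sqrt (real (Suc m)) \<le> (sqrt (real (Suc m)))^2 - 1/2"
    proof -
      have "sqrt (real m) * sqrt (real (Suc m)) = sqrt (real m * (real m + 1))" by (simp add: real_sqrt_mult)
      also have "\<dots> \<le> real m + 1/2"
        by (rule real_le_lsqrt) (auto simp: power2_eq_square algebra_simps)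
      finally show ?thesis by simp
    qed
    ultimately show ?thesis using p by (simp add: field_simps power2_eq_square)
  qed
  then show ?case using Suc by (simp add: HH_Suc)
qed

lemma HH_lower: "2 * sqrt (real m + 1) - 2 \<le> HH m"
proof (induction m)
  case 0 then show ?case by simp
next
  case (Suc m)
  have p: "sqrt (real m + 2) > 0" by simp
  have "2 * sqrt (real m + 2) - 2 * sqrt (real m + 1) \<le> 1 / sqrt (real m + 1)"
  proof -
    have "sqrt (real m + 2) * sqrt (real m + 1) = sqrt ((real m + 2) * (real m + 1))" by (simp add: real_sqrt_mult)
    also have "\<dots> \<le> real m + 3/2"
      by (rule real_le_lsqrt) (auto simp: power2_eq_square algebra_simps)
    finally have "sqrt (real m + 2) * sqrt (real m + 1) \<le> real m + 3/2" .
    moreover have "(sqrt (real m + 1))^2 = real m + 1" by simp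
    ultimately show ?thesis by (simp add: field_simps power2_eq_square)
  qed
  then show ?case using Suc by (simp add: HH_Suc add.commute)
qed

lemma HH_err: "\<bar>HH m - 2 * sqrt (real m)\<bar> \<le> 2"
proof -
  have "sqrt (real m) \<le> sqrt (real m + 1)" by simp
  then show ?thesis using HH_upper[of m] HH_lower[of m] by linarith
qed



lemma fp_shape:
  assumes fp: "is_fixed_point N L F x"
  shows "d < N \<Longrightarrow> fp_f x (N - d) = fp_f x N + real d * F"
proof (induction d)
  case 0 then show ?case by simp
next
  case (Suc d)
  have k: "N - Suc d \<in> {1..<N}" using Suc.prems by auto
  have e: "N - Suc d + 1 = N - d" using Suc.prems by auto
  from fp k have "fp_f x (N - Suc d + 1) + F = fp_f x (N - Suc d)"
    unfolding is_fixed_point_def by blast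
  with e Suc show ?case by (simp add: algebra_simps)
qed

lemma delta_le:
  fixes \<delta> M :: real
  assumes "\<delta> > 0" "M > 0" "1 / \<delta>^2 \<ge> M"
  shows "\<delta> \<le> 1 / sqrt M"
proof -
  have "\<delta>^2 \<le> 1 / M" using assms by (simp add: field_simps)
  then have "sqrt (\<delta>^2) \<le> sqrt (1/M)" by (rule real_sqrt_le_mono)
  then show ?thesis using assms by (simp add: real_sqrt_divide)
qed

lemma delta_eq:
  fixes \<delta> M :: real
  assumes "\<delta> > 0" "M > 0" "1 / \<delta>^2 = M"
  shows "\<delta> = 1 / sqrt M"
proof -
  have "\<delta>^2 = 1 / M" using assms by (simp add: field_simps)
  then have "sqrt (\<delta>^2) = sqrt (1/M)" by simp
  then show ?thesis using assms by (simp add: real_sqrt_divide)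
qed

lemma pos_le:
  fixes x :: "nat \<Rightarrow> real"
  assumes x0: "x 0 = 0" and dec: "\<forall>i<N. x (Suc i) < x i"
    and f: "\<forall>k\<in>{1..N}. fp_f x k \<ge> real (N - k + 1) * F" and F: "F > 0"
  shows "i \<le> N \<Longrightarrow> - x i \<le> (HH N - HH (N - i)) / sqrt F"
proof (induction i)
  case 0 then show ?case using x0 by simp
next
  case (Suc i)
  have iN: "i < N" using Suc.prems by simp
  define \<delta> where "\<delta> = x i - x (Suc i)"
  have dp: "\<delta> > 0" using dec iN by (simp add: \<delta>_def)
  have "Suc i \<in> {1..N}" using iN by simp
  then have "fp_f x (Suc i) \<ge> real (N - Suc i + 1) * F" using f by blast
  moreover have "real (N - Suc i + 1) = real (N - i)" using iN by simp
  moreover have "fp_f x (Suc i) = 1 / \<delta>^2" by (simp add: fp_f_def \<delta>_def)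
  ultimately have "1 / \<delta>^2 \<ge> real (N - i) * F" by simp
  then have "\<delta> \<le> 1 / sqrt (real (N - i) * F)"
    by (intro delta_le) (use dp iN F in auto)
  also have "\<dots> = (1 / sqrt (real (N - i))) / sqrt F" by (simp add: real_sqrt_mult)
  finally have d: "\<delta> \<le> (1 / sqrt (real (N - i))) / sqrt F" .
  have h: "HH (N - i) = HH (N - Suc i) + 1 / sqrt (real (N - i))"
    using HH_Suc[of "N - Suc i"] iN by (simp add: Suc_diff_Suc)
  have "- x (Suc i) = - x i + \<delta>" by (simp add: \<delta>_def)
  also have "\<dots> \<le> (HH N - HH (N - i)) / sqrt F + (1 / sqrt (real (N - i))) / sqrt F"
    using Suc.IH iN d by simp
  also have "\<dots> = (HH N - HH (N - i) + 1 / sqrt (real (N - i))) / sqrt F" by (simp add: add_divide_distrib)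
  also have "\<dots> = (HH N - HH (N - Suc i)) / sqrt F" using h by simp
  finally show ?case .
qed

lemma pos_eq:
  fixes x :: "nat \<Rightarrow> real"
  assumes x0: "x 0 = 0" and dec: "\<forall>i<N. x (Suc i) < x i"
    and f: "\<forall>k\<in>{1..N}. fp_f x k = real (N - k + 1) * F" and F: "F > 0"
  shows "i \<le> N \<Longrightarrow> - x i = (HH N - HH (N - i)) / sqrt F"
proof (induction i)
  case 0 then show ?case using x0 by simp
next
  case (Suc i)
  have iN: "i < N" using Suc.prems by simp
  define \<delta> where "\<delta> = x i - x (Suc i)"
  have dp: "\<delta> > 0" using dec iN by (simp add: \<delta>_def)
  have "Suc i \<in> {1..N}" using iN by simp
  then have "fp_f x (Suc i) = real (N - Suc i + 1) * F" using f by blast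
  then have "1 / \<delta>^2 = real (N - i) * F" using iN by (simp add: fp_f_def \<delta>_def Suc_diff_Suc)
  then have "\<delta> = 1 / sqrt (real (N - i) * F)"
    by (intro delta_eq) (use dp iN F in auto)
  also have "\<dots> = (1 / sqrt (real (N - i))) / sqrt F" by (simp add: real_sqrt_mult)
  finally have d: "\<delta> = (1 / sqrt (real (N - i))) / sqrt F" .
  have h: "HH (N - i) = HH (N - Suc i) + 1 / sqrt (real (N - i))"
    using HH_Suc[of "N - Suc i"] iN by (simp add: Suc_diff_Suc)
  have "- x (Suc i) = - x i + \<delta>" by (simp add: \<delta>_def)
  also have "\<dots> = (HH N - HH (N - i)) / sqrt F + (1 / sqrt (real (N - i))) / sqrt F"
    using Suc.IH iN d by simp
  also have "\<dots> = (HH N - HH (N - i) + 1 / sqrt (real (N - i))) / sqrt F" by (simp add: add_divide_distrib)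
  also have "\<dots> = (HH N - HH (N - Suc i)) / sqrt F" using h by simp
  finally show ?case .
qed

lemma fp_formula:
  assumes L: "L > 0" and c: "c > 4 / L^2" and N: "N \<ge> 1"
    and fp: "is_fixed_point N L (c * real N) x"
  shows "x N > -L \<and> (\<forall>i\<le>N. x i = - (HH N - HH (N - i)) / sqrt (c * real N))"
proof -
  define F where "F = c * real N"
  have "4 / L^2 > 0" using L by simp
  then have c0: "c > 0" using c by linarith
  have F0: "F > 0" using c0 N by (simp add: F_def)
  have x0: "x 0 = 0" and dec: "\<forall>i<N. x (Suc i) < x i"
    using fp unfolding is_fixed_point_def by blast+
  have disj: "(x N = -L \<and> fp_f x N \<ge> F) \<or> (x N > -L \<and> fp_f x N = F)"
    using fp unfolding is_fixed_point_def F_def by blast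
  have sh: "\<forall>k\<in>{1..N}. fp_f x k = fp_f x N + real (N - k) * F"
  proof
    fix k assume k: "k \<in> {1..N}"
    have "fp_f x (N - (N - k)) = fp_f x N + real (N - k) * F"
      using fp_shape[OF fp[folded F_def], of "N - k"] k by auto
    then show "fp_f x k = fp_f x N + real (N - k) * F" using k by simp
  qed
  have fN: "fp_f x N \<ge> F" using disj by auto
  have ge: "\<forall>k\<in>{1..N}. fp_f x k \<ge> real (N - k + 1) * F"
  proof
    fix k assume k: "k \<in> {1..N}"
    have "real (N - k + 1) * F = F + real (N - k) * F" by (simp add: algebra_simps)
    moreover have "fp_f x k = fp_f x N + real (N - k) * F" using sh k by blast
    ultimately show "fp_f x k \<ge> real (N - k + 1) * F" using fN by linarith
  qed
  have xN: "x N > -L"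
  proof (rule ccontr)
    assume "\<not> x N > -L"
    then have "x N = -L" using disj by blast
    moreover have "- x N \<le> (HH N - HH 0) / sqrt F" using pos_le[OF x0 dec ge F0, of N] by simp
    ultimately have "L \<le> HH N / sqrt F" by simp
    also have "\<dots> \<le> 2 * sqrt (real N) / sqrt F"
      using HH_upper[of N] F0 by (simp add: divide_right_mono)
    also have "\<dots> = 2 / sqrt c" using N c0 by (simp add: F_def real_sqrt_mult)
    finally have "L \<le> 2 / sqrt c" .
    then have "L * sqrt c \<le> 2" using c0 by (simp add: field_simps)
    then have "(L * sqrt c)^2 \<le> 2^2" using L c0
      by (intro power_mono) auto
    then have "L^2 * c \<le> 4" using c0 by (simp add: power_mult_distrib)
    moreover have "L^2 * c > 4" using c L by (simp add: field_simps)
    ultimately show False by simp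
  qed
  then have fNe: "fp_f x N = F" using disj by auto
  have eq: "\<forall>k\<in>{1..N}. fp_f x k = real (N - k + 1) * F"
  proof
    fix k assume k: "k \<in> {1..N}"
    have "real (N - k + 1) * F = F + real (N - k) * F" by (simp add: algebra_simps)
    moreover have "fp_f x k = fp_f x N + real (N - k) * F" using sh k by blast
    ultimately show "fp_f x k = real (N - k + 1) * F" using fNe by linarith
  qed
  have "x i = - (HH N - HH (N - i)) / sqrt (c * real N)" if i: "i \<le> N" for i
  proof -
    have "- x i = (HH N - HH (N - i)) / sqrt (c * real N)"
      using pos_eq[OF x0 dec eq F0 i] by (simp add: F_def)
    then show ?thesis by (metis minus_minus minus_divide_left)
  qed
  then show ?thesis using xN by blast
qed



lemma hderiv: "((\<lambda>u::real. (max 0 u)^2) has_real_derivative 2 * max 0 u) (at u)"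
proof (cases "u = 0")
  case True
  have a: "\<forall>y::real. y \<noteq> 0 \<longrightarrow> max 0 y = ((max 0 y)^2 - (max 0 0)^2) / (y - 0)"
    by (auto simp: max_def power2_eq_square)
  have ev: "\<forall>\<^sub>F y in at (0::real). max 0 y = ((max 0 y)^2 - (max 0 0)^2) / (y - 0)"
    unfolding eventually_at using a by (intro exI[of _ 1]) auto
  have "((\<lambda>y::real. max 0 y) \<longlongrightarrow> max 0 0) (at 0)"
    by (intro tendsto_intros)
  then have "((\<lambda>y::real. ((max 0 y)^2 - (max 0 0)^2) / (y - 0)) \<longlongrightarrow> 0) (at 0)"
    using ev by (simp add: tendsto_cong)
  then show ?thesis using True by (simp add: has_field_derivative_iff)
next
  case False
  show ?thesis
  proof (cases "u > 0")
    case True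
    have "((\<lambda>u::real. u^2) has_real_derivative 2 * u) (at u)"
      by (auto intro!: derivative_eq_intros)
    then have "((\<lambda>u::real. (max 0 u)^2) has_real_derivative 2 * u) (at u)"
      by (rule has_field_derivative_transform_within_open[where S="{0<..}"]) (use True in auto)
    then show ?thesis using True by simp
  next
    case False
    then have u: "u < 0" using \<open>u \<noteq> 0\<close> by simp
    have "((\<lambda>u::real. 0) has_real_derivative 0) (at u)"
      by (auto intro!: derivative_eq_intros)
    then have "((\<lambda>u::real. (max 0 u)^2) has_real_derivative 0) (at u)"
      by (rule has_field_derivative_transform_within_open[where S="{..<0}"]) (use u in auto)
    then show ?thesis using u by simp
  qed
qed

lemma rho_integral:
  fixes c a b :: real
  assumes "a \<le> b"
  shows "((\<lambda>t. sqrt c * max 0 (1 + t * sqrt c / 2)) has_integral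
           ((max 0 (1 + b * sqrt c / 2))^2 - (max 0 (1 + a * sqrt c / 2))^2)) {a..b}"
proof (rule fundamental_theorem_of_calculus[OF assms])
  fix x assume "x \<in> {a..b}"
  have "((\<lambda>t. (max 0 (1 + t * sqrt c / 2))^2) has_real_derivative
          2 * max 0 (1 + x * sqrt c / 2) * (sqrt c / 2)) (at x)"
    by (rule DERIV_chain2[OF hderiv]) (auto intro!: derivative_eq_intros)
  then have "((\<lambda>t. (max 0 (1 + t * sqrt c / 2))^2) has_real_derivative
          sqrt c * max 0 (1 + x * sqrt c / 2)) (at x within {a..b})"
    by (rule DERIV_cong[OF has_field_derivative_at_within]) simp
  then show "((\<lambda>t. (max 0 (1 + t * sqrt c / 2))^2) has_vector_derivative
          sqrt c * max 0 (1 + x * sqrt c / 2)) (at x within {a..b})"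
    by (simp add: has_real_derivative_iff_has_vector_derivative)
qed

lemma cnt_lower:
  fixes y :: real
  assumes "y \<le> real N"
  shows "y \<le> real (card {i\<in>{0..N}. real i \<le> y})"
proof (cases "y < 0")
  case True then show ?thesis by simp
next
  case False
  define m where "m = nat \<lfloor>y\<rfloor>"
  have "\<lfloor>y\<rfloor> \<le> \<lfloor>real N\<rfloor>" using assms by (rule floor_mono)
  then have mN: "m \<le> N" unfolding m_def by simp
  have my: "real m \<le> y" using False unfolding m_def by simp
  have "{0..m} \<subseteq> {i\<in>{0..N}. real i \<le> y}"
  proof
    fix i assume "i \<in> {0..m}"
    then have "i \<le> m" by simp
    then have "real i \<le> real m" by simp
    then show "i \<in> {i\<in>{0..N}. real i \<le> y}" using my mN \<open>i \<le> m\<close> by auto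
  qed
  then have "card {0..m} \<le> card {i\<in>{0..N}. real i \<le> y}" by (intro card_mono) auto
  moreover have "y \<le> real (card {0..m})" using False by (simp add: m_def) linarith
  ultimately show ?thesis by linarith
qed

lemma cnt_upper:
  fixes y :: real
  assumes y: "y \<ge> 0"
  shows "real (card {i\<in>{0..N}. real i \<le> y}) \<le> y + 1"
proof -
  define m where "m = nat \<lfloor>y\<rfloor>"
  have fl: "0 \<le> \<lfloor>y\<rfloor>" using y by simp
  have my: "real m \<le> y" unfolding m_def using fl by simp
  have "{i\<in>{0..N}. real i \<le> y} \<subseteq> {0..m}"
  proof
    fix i assume "i \<in> {i\<in>{0..N}. real i \<le> y}"
    then have "real i \<le> y" by simp
    then have "of_int (int i) \<le> y" by simp
    then have "int i \<le> \<lfloor>y\<rfloor>" by (simp only: le_floor_iff)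
    then show "i \<in> {0..m}" unfolding m_def by simp
  qed
  then have "card {i\<in>{0..N}. real i \<le> y} \<le> card {0..m}" by (intro card_mono) auto
  then have "real (card {i\<in>{0..N}. real i \<le> y}) \<le> real m + 1" by simp
  then show ?thesis using my by linarith
qed



definition yt :: "real \<Rightarrow> nat \<Rightarrow> nat \<Rightarrow> real" where
  "yt c N i = (2 * sqrt (real N) - 2 * sqrt (real (N - i))) / sqrt (c * real N)"

definition qq :: "real \<Rightarrow> real \<Rightarrow> real" where
  "qq c T = 1 - (max 0 (1 - T * sqrt c / 2))^2"

lemma yt_iff:
  assumes c: "c > 0" and N: "N \<ge> 1" and i: "i \<le> N"
  shows "yt c N i \<le> T \<longleftrightarrow> sqrt (real N) * (1 - T * sqrt c / 2) \<le> sqrt (real (N - i))"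
proof -
  have p: "sqrt (c * real N) > 0" using c N by simp
  have "yt c N i \<le> T \<longleftrightarrow> 2 * sqrt (real N) - 2 * sqrt (real (N - i)) \<le> T * sqrt (c * real N)"
    using p by (simp add: yt_def pos_divide_le_eq)
  also have "\<dots> \<longleftrightarrow> sqrt (real N) * (1 - T * sqrt c / 2) \<le> sqrt (real (N - i))"
  proof -
    have key: "\<And>A B C D::real. A = 2*(B - C) \<Longrightarrow> (2*B - 2*D \<le> A) = (C \<le> D)" by auto
    show ?thesis by (rule key) (simp add: real_sqrt_mult algebra_simps)
  qed
  finally show ?thesis .
qed

lemma D_set:
  assumes c: "c > 0" and N: "N \<ge> 1" and g: "1 - T * sqrt c / 2 > 0"
  shows "{i\<in>{0..N}. yt c N i \<le> T} = {i\<in>{0..N}. real i \<le> real N * qq c T}"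
proof -
  define g where "g = 1 - T * sqrt c / 2"
  have g0: "g > 0" using assms by (simp add: g_def)
  have "yt c N i \<le> T \<longleftrightarrow> real i \<le> real N * qq c T" if i: "i \<le> N" for i
  proof -
    have "sqrt (real N) * g = sqrt (real N * g^2)" using g0 by (simp add: real_sqrt_mult)
    then have "yt c N i \<le> T \<longleftrightarrow> sqrt (real N * g^2) \<le> sqrt (real (N - i))"
      using yt_iff[OF c N i, of T] by (simp add: g_def)
    also have "\<dots> \<longleftrightarrow> real N * g^2 \<le> real N - real i" using i by (simp add: of_nat_diff)
    also have "\<dots> \<longleftrightarrow> real i \<le> real N * qq c T" using g0
      by (simp add: qq_def g_def[symmetric] max_def algebra_simps)
    finally show ?thesis .
  qed
  then show ?thesis by auto
qed

lemma D_lower: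
  assumes c: "c > 0" and N: "N \<ge> 1"
  shows "real N * qq c T \<le> real (card {i\<in>{0..N}. yt c N i \<le> T})"
proof (cases "1 - T * sqrt c / 2 > 0")
  case True
  have "qq c T \<le> 1" by (simp add: qq_def)
  then have "real N * qq c T \<le> real N" by (simp add: mult_left_le)
  then show ?thesis using D_set[OF c N True] cnt_lower by simp
next
  case False
  have "{i\<in>{0..N}. yt c N i \<le> T} = {0..N}"
  proof -
    have "sqrt (real N) * (1 - T * sqrt c / 2) \<le> 0"
      using False by (intro mult_nonneg_nonpos) auto
    then have "\<forall>i\<le>N. yt c N i \<le> T" using yt_iff[OF c N]
      by (meson order_trans real_sqrt_ge_zero of_nat_0_le_iff)
    then show ?thesis by auto
  qed
  moreover have "qq c T = 1" using False by (simp add: qq_def)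
  ultimately show ?thesis by simp
qed

lemma D_upper:
  assumes c: "c > 0" and N: "N \<ge> 1" and T: "T \<ge> 0"
  shows "real (card {i\<in>{0..N}. yt c N i \<le> T}) \<le> real N * qq c T + 1"
proof (cases "1 - T * sqrt c / 2 > 0")
  case True
  have "1 - T * sqrt c / 2 \<le> 1" using T c by simp
  then have "(max 0 (1 - T * sqrt c / 2))^2 \<le> 1" using True by (simp add: power_le_one)
  then have "qq c T \<ge> 0" by (simp add: qq_def)
  then show ?thesis using D_set[OF c N True] cnt_upper by simp
next
  case False
  have "card {i\<in>{0..N}. yt c N i \<le> T} \<le> card {0..N}" by (intro card_mono) auto
  moreover have "qq c T = 1" using False by (simp add: qq_def)
  ultimately show ?thesis by simp
qed



lemma qq_cont: "isCont (qq c) T"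
  unfolding qq_def by (intro continuous_intros) auto

lemma eps_lim: "c > 0 \<Longrightarrow> ((\<lambda>N. 4 / sqrt (c * real N)) \<longlongrightarrow> 0) sequentially"
proof -
  assume c: "c > 0"
  have "((\<lambda>N. sqrt (1 / real N)) \<longlongrightarrow> sqrt 0) sequentially"
    by (intro tendsto_real_sqrt lim_const_over_n)
  then have "((\<lambda>N. 1 / sqrt (real N)) \<longlongrightarrow> 0) sequentially" by (simp add: real_sqrt_divide)
  then have "((\<lambda>N. (4 / sqrt c) * (1 / sqrt (real N))) \<longlongrightarrow> 0) sequentially"
    by (rule tendsto_mult_right_zero)
  then show ?thesis by (simp add: real_sqrt_mult)
qed

lemma squeeze_lim:
  assumes c: "c > 0"
    and lo: "\<And>N. N \<ge> 1 \<Longrightarrow> qq c (T - k * (4 / sqrt (c * real N))) \<le> s N"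
    and hi: "\<And>N. N \<ge> 1 \<Longrightarrow> s N \<le> qq c (T + 4 / sqrt (c * real N)) + 1 / real N"
  shows "(s \<longlongrightarrow> qq c T) sequentially"
proof (rule tendsto_sandwich)
  show "\<forall>\<^sub>F N in sequentially. qq c (T - k * (4 / sqrt (c * real N))) \<le> s N"
    using lo by (auto simp: eventually_sequentially)
  show "\<forall>\<^sub>F N in sequentially. s N \<le> qq c (T + 4 / sqrt (c * real N)) + 1 / real N"
    using hi by (auto simp: eventually_sequentially)
  have e: "((\<lambda>N. 4 / sqrt (c * real N)) \<longlongrightarrow> 0) sequentially" using eps_lim c .
  have "((\<lambda>N. T - k * (4 / sqrt (c * real N))) \<longlongrightarrow> T - k * 0) sequentially"
    by (intro tendsto_intros e)
  then show "((\<lambda>N. qq c (T - k * (4 / sqrt (c * real N)))) \<longlongrightarrow> qq c T) sequentially"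
    using isCont_tendsto_compose[OF qq_cont] by simp
  have "((\<lambda>N. T + 4 / sqrt (c * real N)) \<longlongrightarrow> T + 0) sequentially"
    by (intro tendsto_intros e)
  then have "((\<lambda>N. qq c (T + 4 / sqrt (c * real N))) \<longlongrightarrow> qq c T) sequentially"
    using isCont_tendsto_compose[OF qq_cont] by simp
  moreover have "((\<lambda>N. 1 / real N) \<longlongrightarrow> 0) sequentially" by (rule lim_const_over_n)
  ultimately show "((\<lambda>N. qq c (T + 4 / sqrt (c * real N)) + 1 / real N) \<longlongrightarrow> qq c T) sequentially"
    using tendsto_add by fastforce
qed

context
  fixes c :: real and X :: "nat \<Rightarrow> nat \<Rightarrow> real"
  assumes c: "c > 0"
    and hX: "\<And>N i. N \<ge> 1 \<Longrightarrow> i \<le> N \<Longrightarrow> X N i = - (HH N - HH (N - i)) / sqrt (c * real N)"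
begin

lemma err: "N \<ge> 1 \<Longrightarrow> i \<le> N \<Longrightarrow> \<bar>- X N i - yt c N i\<bar> \<le> 4 / sqrt (c * real N)"
proof -
  assume N: "N \<ge> 1" and i: "i \<le> N"
  have p: "sqrt (c * real N) > 0" using c N by simp
  have "- X N i - yt c N i = ((HH N - 2 * sqrt (real N)) - (HH (N - i) - 2 * sqrt (real (N - i)))) / sqrt (c * real N)"
    using hX[OF N i] by (simp add: yt_def diff_divide_distrib)
  moreover have "\<bar>(HH N - 2 * sqrt (real N)) - (HH (N - i) - 2 * sqrt (real (N - i)))\<bar> \<le> 4"
    using HH_err[of N] HH_err[of "N - i"] by linarith
  ultimately show ?thesis using p by (simp add: abs_div divide_right_mono)
qed

lemma card_le_lim:
  assumes T: "T \<ge> 0"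
  shows "((\<lambda>N. real (card {i\<in>{0..N}. - X N i \<le> T}) / real N) \<longlongrightarrow> qq c T) sequentially"
proof (rule squeeze_lim[OF c, where k=1])
  fix N :: nat assume N: "N \<ge> 1"
  define e where "e = 4 / sqrt (c * real N)"
  have Np: "real N > 0" using N by simp
  have ep: "e > 0" using c N by (simp add: e_def)
  have s1: "{i\<in>{0..N}. yt c N i \<le> T - e} \<subseteq> {i\<in>{0..N}. - X N i \<le> T}"
  proof (intro subsetI)
    fix i assume "i \<in> {i\<in>{0..N}. yt c N i \<le> T - e}"
    then have i: "i \<le> N" and h: "yt c N i \<le> T - e" by auto
    have "\<bar>- X N i - yt c N i\<bar> \<le> e" using err[OF N i] by (simp add: e_def)
    then show "i \<in> {i\<in>{0..N}. - X N i \<le> T}" using i h ep by (auto simp: abs_le_iff)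
  qed
  have s2: "{i\<in>{0..N}. - X N i \<le> T} \<subseteq> {i\<in>{0..N}. yt c N i \<le> T + e}"
  proof (intro subsetI)
    fix i assume "i \<in> {i\<in>{0..N}. - X N i \<le> T}"
    then have i: "i \<le> N" and h: "- X N i \<le> T" by auto
    have "\<bar>- X N i - yt c N i\<bar> \<le> e" using err[OF N i] by (simp add: e_def)
    then show "i \<in> {i\<in>{0..N}. yt c N i \<le> T + e}" using i h ep by (auto simp: abs_le_iff)
  qed
  have "real N * qq c (T - e) \<le> real (card {i\<in>{0..N}. - X N i \<le> T})"
    using D_lower[OF c N, of "T - e"] card_mono[OF _ s1] by fastforce
  then show "qq c (T - 1 * (4 / sqrt (c * real N))) \<le> real (card {i\<in>{0..N}. - X N i \<le> T}) / real N"
    using Np by (simp add: e_def field_simps)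
  have "real (card {i\<in>{0..N}. - X N i \<le> T}) \<le> real N * qq c (T + e) + 1"
    using D_upper[OF c N, of "T + e"] card_mono[OF _ s2] T ep by fastforce
  then show "real (card {i\<in>{0..N}. - X N i \<le> T}) / real N \<le> qq c (T + 4 / sqrt (c * real N)) + 1 / real N"
    using Np by (simp add: e_def field_simps)
qed

lemma card_lt_lim:
  assumes T: "T \<ge> 0"
  shows "((\<lambda>N. real (card {i\<in>{0..N}. - X N i < T}) / real N) \<longlongrightarrow> qq c T) sequentially"
proof (rule squeeze_lim[OF c, where k=2])
  fix N :: nat assume N: "N \<ge> 1"
  define e where "e = 4 / sqrt (c * real N)"
  have Np: "real N > 0" using N by simp
  have ep: "e > 0" using c N by (simp add: e_def)
  have s1: "{i\<in>{0..N}. yt c N i \<le> T - 2 * e} \<subseteq> {i\<in>{0..N}. - X N i < T}"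
  proof (intro subsetI)
    fix i assume "i \<in> {i\<in>{0..N}. yt c N i \<le> T - 2 * e}"
    then have i: "i \<le> N" and h: "yt c N i \<le> T - 2 * e" by auto
    have "\<bar>- X N i - yt c N i\<bar> \<le> e" using err[OF N i] by (simp add: e_def)
    then show "i \<in> {i\<in>{0..N}. - X N i < T}" using i h ep by (auto simp: abs_le_iff)
  qed
  have s2: "{i\<in>{0..N}. - X N i < T} \<subseteq> {i\<in>{0..N}. yt c N i \<le> T + e}"
  proof (intro subsetI)
    fix i assume "i \<in> {i\<in>{0..N}. - X N i < T}"
    then have i: "i \<le> N" and h: "- X N i < T" by auto
    have "\<bar>- X N i - yt c N i\<bar> \<le> e" using err[OF N i] by (simp add: e_def)
    then show "i \<in> {i\<in>{0..N}. yt c N i \<le> T + e}" using i h ep by (auto simp: abs_le_iff)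
  qed
  have "real N * qq c (T - 2 * e) \<le> real (card {i\<in>{0..N}. - X N i < T})"
    using D_lower[OF c N, of "T - 2 * e"] card_mono[OF _ s1] by fastforce
  then show "qq c (T - 2 * (4 / sqrt (c * real N))) \<le> real (card {i\<in>{0..N}. - X N i < T}) / real N"
    using Np by (simp add: e_def field_simps)
  have "real (card {i\<in>{0..N}. - X N i < T}) \<le> real N * qq c (T + e) + 1"
    using D_upper[OF c N, of "T + e"] card_mono[OF _ s2] T ep by fastforce
  then show "real (card {i\<in>{0..N}. - X N i < T}) / real N \<le> qq c (T + 4 / sqrt (c * real N)) + 1 / real N"
    using Np by (simp add: e_def field_simps)
qed

lemma card_int_lim:
  assumes ab: "a \<le> b" "b \<le> 0"
  shows "((\<lambda>N. real (card {i\<in>{0..N}. X N i \<in> {a..b}}) / real N) \<longlongrightarrow> qq c (-a) - qq c (-b)) sequentially"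
proof -
  have eq: "real (card {i\<in>{0..N}. X N i \<in> {a..b}}) / real N =
        real (card {i\<in>{0..N}. - X N i \<le> -a}) / real N - real (card {i\<in>{0..N}. - X N i < -b}) / real N" for N
  proof -
    have sub: "{i\<in>{0..N}. - X N i < -b} \<subseteq> {i\<in>{0..N}. - X N i \<le> -a}" using ab by auto
    have "{i\<in>{0..N}. X N i \<in> {a..b}} = {i\<in>{0..N}. - X N i \<le> -a} - {i\<in>{0..N}. - X N i < -b}"
      by auto
    then have "card {i\<in>{0..N}. X N i \<in> {a..b}} = card {i\<in>{0..N}. - X N i \<le> -a} - card {i\<in>{0..N}. - X N i < -b}"
      using card_Diff_subset[OF _ sub] by simp
    moreover have "card {i\<in>{0..N}. - X N i < -b} \<le> card {i\<in>{0..N}. - X N i \<le> -a}"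
      by (rule card_mono[OF _ sub]) simp
    ultimately show ?thesis by (simp add: of_nat_diff diff_divide_distrib)
  qed
  show ?thesis unfolding eq
    by (intro tendsto_diff card_le_lim card_lt_lim) (use ab in auto)
qed

lemma last_lim: "((\<lambda>N. X N N) \<longlongrightarrow> - 2 / sqrt c) sequentially"
proof -
  have "((\<lambda>N. X N N - (- 2 / sqrt c)) \<longlongrightarrow> 0) sequentially"
  proof (rule Lim_null_comparison)
    show "\<forall>\<^sub>F N in sequentially. norm (X N N - (- 2 / sqrt c)) \<le> 4 / sqrt (c * real N)"
      unfolding eventually_sequentially
    proof (intro exI allI impI)
      fix N :: nat assume N: "N \<ge> 1"
      have "\<bar>- X N N - yt c N N\<bar> \<le> 4 / sqrt (c * real N)" using err[OF N] by simp
      moreover have "yt c N N = 2 / sqrt c" using N c by (simp add: yt_def real_sqrt_mult)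
      ultimately show "norm (X N N - (- 2 / sqrt c)) \<le> 4 / sqrt (c * real N)" by simp
    qed
    show "((\<lambda>N. 4 / sqrt (c * real N)) \<longlongrightarrow> 0) sequentially" using eps_lim c .
  qed
  from tendsto_add[OF this tendsto_const[of "- 2 / sqrt c"]] show ?thesis by simp
qed

end



theorem theorem2:
  fixes L c :: real and X :: "nat \<Rightarrow> nat \<Rightarrow> real"
  assumes "L > 0"
    and "c > 4 / L^2"
    and "\<And>N. N \<ge> 1 \<Longrightarrow> is_fixed_point N L (c * real N) (X N)"
  shows "(\<forall>\<^sub>F N in sequentially. X N N > -L)
     \<and> ((\<lambda>N. X N N) \<longlongrightarrow> - 2 / sqrt c) sequentially
     \<and> (\<exists>\<rho>. is_fp_density L X \<rho>
           \<and> (\<forall>x\<in>{-L..< - 2 / sqrt c}. \<rho> x = 0)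
           \<and> \<not> (\<exists>k. AE x in lborel. x \<in> {- 2 / sqrt c<..<0} \<longrightarrow> \<rho> x = k))"
proof -
  have "4 / L^2 > 0" using assms(1) by simp
  then have c0: "c > 0" using assms(2) by linarith
  have fpf: "X N N > -L \<and> (\<forall>i\<le>N. X N i = - (HH N - HH (N - i)) / sqrt (c * real N))"
    if "N \<ge> 1" for N
    using fp_formula[OF assms(1) assms(2) that assms(3)[OF that]] .
  have hX: "\<And>N i. N \<ge> 1 \<Longrightarrow> i \<le> N \<Longrightarrow> X N i = - (HH N - HH (N - i)) / sqrt (c * real N)"
    using fpf by blast
  have P1: "\<forall>\<^sub>F N in sequentially. X N N > -L"
    unfolding eventually_sequentially using fpf by blast
  have P2: "((\<lambda>N. X N N) \<longlongrightarrow> - 2 / sqrt c) sequentially"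
    by (rule last_lim[OF c0 hX])
  define \<rho> where "\<rho> = (\<lambda>t::real. sqrt c * max 0 (1 + t * sqrt c / 2))"
  have sc: "sqrt c > 0" using c0 by simp
  have D: "is_fp_density L X \<rho>"
    unfolding is_fp_density_def
  proof (intro allI impI conjI)
    fix a b :: real assume a: "-L \<le> a" and ab: "a \<le> b" and b: "b \<le> 0"
    have hi: "(\<rho> has_integral ((max 0 (1 + b * sqrt c / 2))^2 - (max 0 (1 + a * sqrt c / 2))^2)) {a..b}"
      unfolding \<rho>_def by (rule rho_integral[OF ab])
    then show "\<rho> integrable_on {a..b}" by blast
    have "integral {a..b} \<rho> = (max 0 (1 + b * sqrt c / 2))^2 - (max 0 (1 + a * sqrt c / 2))^2"
      using hi by (rule integral_unique)
    also have "\<dots> = qq c (-a) - qq c (-b)" by (simp add: qq_def)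
    finally show "((\<lambda>N. real (card {i\<in>{0..N}. X N i \<in> {a..b}}) / real N) \<longlongrightarrow> integral {a..b} \<rho>) sequentially"
      using card_int_lim[OF c0 hX ab b] by simp
  qed
  have V: "\<forall>x\<in>{-L..< - 2 / sqrt c}. \<rho> x = 0"
  proof
    fix x assume "x \<in> {-L..< - 2 / sqrt c}"
    then have "x < - 2 / sqrt c" by simp
    then have "x * sqrt c < -2" using sc by (simp add: field_simps)
    then show "\<rho> x = 0" by (simp add: \<rho>_def)
  qed
  define p where "p = - 2 / sqrt c"
  have pneg: "p < 0" using sc by (simp add: p_def)
  have pc: "p / 2 * c = - sqrt c"
  proof -
    have "p / 2 * c = - (sqrt c * sqrt c) / sqrt c" using c0 by (simp add: p_def)
    also have "\<dots> = - sqrt c" using sc by (simp add: field_simps)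
    finally show ?thesis .
  qed
  have lin: "\<rho> x = sqrt c + x * c / 2" if "x \<in> {p<..<0}" for x
  proof -
    from that have "x > - 2 / sqrt c" by (simp add: p_def)
    then have "x * sqrt c > -2" using sc by (simp add: field_simps)
    then have "\<rho> x = sqrt c * (1 + x * sqrt c / 2)" by (simp add: \<rho>_def)
    also have "\<dots> = sqrt c + x * (sqrt c * sqrt c) / 2" by (simp add: algebra_simps)
    finally show ?thesis using c0 by simp
  qed
  have NC: "\<not> (\<exists>k. AE x in lborel. x \<in> {p<..<0} \<longrightarrow> \<rho> x = k)"
  proof
    assume "\<exists>k. AE x in lborel. x \<in> {p<..<0} \<longrightarrow> \<rho> x = k"
    then obtain k where ae: "AE x in lborel. x \<in> {p<..<0} \<longrightarrow> \<rho> x = k" by blast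
    obtain l r where lr: "l < r" "{l<..<r} \<subseteq> {p<..<0}" "\<forall>x\<in>{l<..<r}. \<rho> x \<noteq> k"
    proof (cases "k \<le> sqrt c / 2")
      case True
      show ?thesis
      proof (rule that[of "p/2" 0])
        show "p/2 < 0" using pneg by simp
        show "{p/2<..<0} \<subseteq> {p<..<0}" using pneg by auto
        show "\<forall>x\<in>{p/2<..<0}. \<rho> x \<noteq> k"
        proof
          fix x assume x: "x \<in> {p/2<..<0}"
          then have "x \<in> {p<..<0}" using pneg by auto
          then have "\<rho> x = sqrt c + x * c / 2" by (rule lin)
          moreover have "x * c > p/2 * c" using x c0 by (simp add: mult_strict_right_mono)
          moreover have "p/2 * c = - sqrt c" by (rule pc)
          ultimately have "\<rho> x > sqrt c / 2" by linarith
          then show "\<rho> x \<noteq> k" using True by linarith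
        qed
      qed
    next
      case False
      show ?thesis
      proof (rule that[of p "p/2"])
        show "p < p/2" using pneg by simp
        show "{p<..<p/2} \<subseteq> {p<..<0}" using pneg by auto
        show "\<forall>x\<in>{p<..<p/2}. \<rho> x \<noteq> k"
        proof
          fix x assume x: "x \<in> {p<..<p/2}"
          then have "x \<in> {p<..<0}" using pneg by auto
          then have "\<rho> x = sqrt c + x * c / 2" by (rule lin)
          moreover have "x * c < p/2 * c" using x c0 by (simp add: mult_strict_right_mono)
          moreover have "p/2 * c = - sqrt c" by (rule pc)
          ultimately have "\<rho> x < sqrt c / 2" by linarith
          then show "\<rho> x \<noteq> k" using False by linarith
        qed
      qed
    qed
    from ae obtain Z where Z: "{x \<in> space lborel. \<not> (x \<in> {p<..<0} \<longrightarrow> \<rho> x = k)} \<subseteq> Z"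
        "emeasure lborel Z = 0" "Z \<in> sets lborel"
      by (rule AE_E)
    have "{l<..<r} \<subseteq> Z"
    proof
      fix x assume x: "x \<in> {l<..<r}"
      then have "x \<in> {p<..<0}" "\<rho> x \<noteq> k" using lr(2,3) by auto
      then show "x \<in> Z" using Z(1) by auto
    qed
    then have "emeasure lborel {l<..<r} \<le> emeasure lborel Z"
      by (intro emeasure_mono Z(3))
    then have "ennreal (r - l) \<le> 0" using Z(2) lr(1) by simp
    then show False using lr(1) by simp
  qed
  show ?thesis using P1 P2 D V NC unfolding p_def by blast
qed

end
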